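(* Let $d>2$ and let $H$ be a $d\times d$ complex Hadamard matrix whose dephased form has an ER pair of columns or an ER pair of rows. Then $H$ is not isolated; that is, $H$ belongs to a continuous one-parameter family of complex Hadamard matrices containing matrices inequivalent to $H$.
   Context: A $d\times d$ complex Hadamard matrix has unimodular entries and pairwise orthogonal columns. Two complex Hadamard matrices $H_1,H_2$ are equivalent if $H_2=D_1P_1H_1P_2D_2$ for diagonal unitary $D_1,D_2$ and permutation matrices $P_1,P_2$. The dephased form of $H$ is the unique matrix $H'=D_1HD_2$ ($D_1,D_2$ diagonal unitary) whose first row and first column consist of $1$'s. Two distinct columns $C_A,C_B$ form an ER pair if $\overline{(C_A)_j}(C_B)_j\in\{1,-1\}$ for all $j$; ER pairs of rows are defined analogously. A complex Hadamard matrix is isolated if it does not belong to any continuous family of (pairwise inequivalent) complex Hadamard matrices. *)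

theory Defs
  imports "HOL-Analysis.Analysis"
begin

text \<open>A d x d complex matrix is represented as a function nat => nat => complex;
only the entries with both indices < d are relevant. Index 0 is the first row/column.\<close>

definition complex_hadamard :: "nat \<Rightarrow> (nat \<Rightarrow> nat \<Rightarrow> complex) \<Rightarrow> bool" where
  "complex_hadamard d H \<longleftrightarrow>
     (\<forall>i<d. \<forall>j<d. norm (H i j) = 1) \<and>
     (\<forall>j<d. \<forall>k<d. j \<noteq> k \<longrightarrow> (\<Sum>i<d. cnj (H i j) * H i k) = 0)"

text \<open>H2 = D1 P1 H1 P2 D2 with D1, D2 diagonal unitary and P1, P2 permutation matrices,
written out entrywise.\<close>
definition hadamard_equiv :: "nat \<Rightarrow> (nat \<Rightarrow> nat \<Rightarrow> complex) \<Rightarrow> (nat \<Rightarrow> nat \<Rightarrow> complex) \<Rightarrow> bool" where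
  "hadamard_equiv d H1 H2 \<longleftrightarrow>
     (\<exists>a b :: nat \<Rightarrow> complex. \<exists>\<sigma> \<tau> :: nat \<Rightarrow> nat.
        (\<forall>i<d. norm (a i) = 1) \<and> (\<forall>j<d. norm (b j) = 1) \<and>
        \<sigma> permutes {..<d} \<and> \<tau> permutes {..<d} \<and>
        (\<forall>i<d. \<forall>j<d. H2 i j = a i * H1 (\<sigma> i) (\<tau> j) * b j))"

text \<open>The dephased form: the unique matrix D1 H D2 (D1, D2 diagonal unitary) whose first row and
first column consist of 1's (entries outside the d x d range are set to 0 for uniqueness).\<close>
definition dephased :: "nat \<Rightarrow> (nat \<Rightarrow> nat \<Rightarrow> complex) \<Rightarrow> (nat \<Rightarrow> nat \<Rightarrow> complex)" where
  "dephased d H = (THE H'.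
     (\<exists>a b :: nat \<Rightarrow> complex. (\<forall>i<d. norm (a i) = 1) \<and> (\<forall>j<d. norm (b j) = 1) \<and>
        (\<forall>i<d. \<forall>j<d. H' i j = a i * H i j * b j)) \<and>
     (\<forall>j<d. H' 0 j = 1) \<and> (\<forall>i<d. H' i 0 = 1) \<and>
     (\<forall>i j. d \<le> i \<or> d \<le> j \<longrightarrow> H' i j = 0))"

definition ER_pair_columns :: "nat \<Rightarrow> (nat \<Rightarrow> nat \<Rightarrow> complex) \<Rightarrow> bool" where
  "ER_pair_columns d M \<longleftrightarrow>
     (\<exists>A<d. \<exists>B<d. A \<noteq> B \<and> (\<forall>j<d. cnj (M j A) * M j B \<in> {1, -1}))"

definition ER_pair_rows :: "nat \<Rightarrow> (nat \<Rightarrow> nat \<Rightarrow> complex) \<Rightarrow> bool" where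
  "ER_pair_rows d M \<longleftrightarrow>
     (\<exists>A<d. \<exists>B<d. A \<noteq> B \<and> (\<forall>j<d. cnj (M A j) * M B j \<in> {1, -1}))"

end

theory Submission
  imports Defs "Jordan_Normal_Form.Determinant"
begin


lemma unimod_cnj: "norm (z::complex) = 1 \<Longrightarrow> cnj z * z = 1"
  by (metis complex_norm_square mult.commute of_real_1 power_one)

lemma hadamard_transpose:
  assumes "complex_hadamard d H"
  shows "complex_hadamard d (\<lambda>i j. H j i)"
proof -
  have n1: "\<And>i j. i<d \<Longrightarrow> j<d \<Longrightarrow> norm (H i j) = 1" and
    orth: "\<And>j k. j<d \<Longrightarrow> k<d \<Longrightarrow> j \<noteq> k \<Longrightarrow> (\<Sum>i<d. cnj (H i j) * H i k) = 0"
    using assms unfolding complex_hadamard_def by auto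
  show ?thesis
  proof (cases "d = 0")
    case True thus ?thesis by (simp add: complex_hadamard_def)
  next
    case False
    define M where "M = mat d d (\<lambda>(i,j). H i j)"
    define N where "N = mat d d (\<lambda>(i,j). cnj (H j i) / of_nat d)"
    have M: "M \<in> carrier_mat d d" and N: "N \<in> carrier_mat d d" unfolding M_def N_def by auto
    have "N * M = 1\<^sub>m d"
    proof (rule eq_matI)
      fix i j assume ij: "i < dim_row (1\<^sub>m d :: complex mat)" "j < dim_col (1\<^sub>m d :: complex mat)"
      hence ij': "i < d" "j < d" by auto
      have "(N * M) $$ (i,j) = (\<Sum>k<d. cnj (H k i) * H k j) / of_nat d"
        using ij' unfolding M_def N_def
        by (simp add: scalar_prod_def atLeast0LessThan sum_divide_distrib)
      also have "\<dots> = (if i = j then 1 else 0)"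
      proof (cases "i = j")
        case True
        have "(\<Sum>k<d. cnj (H k i) * H k j) = (\<Sum>k<d. 1)"
          using True ij' n1 unimod_cnj by (intro sum.cong) auto
        then show ?thesis using True False by simp
      next
        case f: False thus ?thesis using orth ij' by simp
      qed
      finally show "(N * M) $$ (i,j) = 1\<^sub>m d $$ (i,j)" using ij' by simp
    qed (auto simp: M_def N_def)
    from mat_mult_left_right_inverse[OF N M this]
    have MN: "M * N = 1\<^sub>m d" .
    show ?thesis unfolding complex_hadamard_def
    proof (intro conjI allI impI)
      fix i j assume "i < d" "j < d" thus "norm (H j i) = 1" using n1 by simp
    next
      fix j k assume jk: "j < d" "k < d" "j \<noteq> k"
      have "(M * N) $$ (k,j) = 0" using MN jk by simp
      moreover have "(M * N) $$ (k,j) = (\<Sum>i<d. cnj (H j i) * H k i) / of_nat d"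
        using jk unfolding M_def N_def
        by (simp add: scalar_prod_def atLeast0LessThan sum_divide_distrib mult.commute)
      ultimately show "(\<Sum>i<d. cnj (H j i) * H k i) = 0" using False by simp
    qed
  qed
qed


lemma unimod_inv: "norm (z::complex) = 1 \<Longrightarrow> cnj z = inverse z"
  using unimod_cnj[of z] by (metis inverse_unique mult.commute)

lemma unimod_nz: "norm (z::complex) = 1 \<Longrightarrow> z \<noteq> 0"
  by auto

lemma dephased_eq:
  assumes d: "d > 0" and n1: "\<forall>i<d. \<forall>j<d. norm (H i j) = 1"
  shows "dephased d H = (\<lambda>i j. if i < d \<and> j < d then H i j * H 0 0 / (H i 0 * H 0 j) else 0)"
    (is "_ = ?D")
  unfolding dephased_def
proof (rule the_equality)
  have nz: "\<And>i j. i<d \<Longrightarrow> j<d \<Longrightarrow> H i j \<noteq> 0" using n1 by fastforce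
  show "(\<exists>a b :: nat \<Rightarrow> complex. (\<forall>i<d. norm (a i) = 1) \<and> (\<forall>j<d. norm (b j) = 1) \<and>
        (\<forall>i<d. \<forall>j<d. ?D i j = a i * H i j * b j)) \<and>
     (\<forall>j<d. ?D 0 j = 1) \<and> (\<forall>i<d. ?D i 0 = 1) \<and>
     (\<forall>i j. d \<le> i \<or> d \<le> j \<longrightarrow> ?D i j = 0)"
  proof (intro conjI)
    show "\<exists>a b :: nat \<Rightarrow> complex. (\<forall>i<d. norm (a i) = 1) \<and> (\<forall>j<d. norm (b j) = 1) \<and>
        (\<forall>i<d. \<forall>j<d. ?D i j = a i * H i j * b j)"
      apply (rule exI[of _ "\<lambda>i. 1 / H i 0"], rule exI[of _ "\<lambda>j. H 0 0 / H 0 j"])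
      using n1 d nz by (auto simp: norm_divide)
  qed (use d nz in auto)
next
  fix H' assume P: "(\<exists>a b :: nat \<Rightarrow> complex. (\<forall>i<d. norm (a i) = 1) \<and> (\<forall>j<d. norm (b j) = 1) \<and>
        (\<forall>i<d. \<forall>j<d. H' i j = a i * H i j * b j)) \<and>
     (\<forall>j<d. H' 0 j = 1) \<and> (\<forall>i<d. H' i 0 = 1) \<and>
     (\<forall>i j. d \<le> i \<or> d \<le> j \<longrightarrow> H' i j = 0)"
  then obtain a b where na: "\<forall>i<d. norm (a i) = 1" and nb: "\<forall>j<d. norm (b j) = 1"
    and eq: "\<forall>i<d. \<forall>j<d. H' i j = a i * H i j * b j" by blast
  show "H' = ?D"
  proof (intro ext)
    fix i j
    show "H' i j = ?D i j"
    proof (cases "i < d \<and> j < d")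
      case True
      have e1: "a i * H i 0 * b 0 = 1" using P eq True d by (metis)
      have e2: "a 0 * H 0 j * b j = 1" using P eq True d by (metis)
      have e3: "a 0 * H 0 0 * b 0 = 1" using P eq True d by (metis)
      have nz0: "a 0 * b 0 \<noteq> 0" using na nb d by fastforce
      have "(a i * b j * (H i 0 * H 0 j)) * (a 0 * b 0) = (a i * H i 0 * b 0) * (a 0 * H 0 j * b j)"
        by (simp add: algebra_simps)
      also have "\<dots> = H 0 0 * (a 0 * b 0)" using e1 e2 e3 by (simp add: algebra_simps)
      finally have "a i * b j * (H i 0 * H 0 j) = H 0 0" using nz0 by simp
      moreover have "H i 0 * H 0 j \<noteq> 0" using n1 True d by fastforce
      ultimately have ab: "a i * b j = H 0 0 / (H i 0 * H 0 j)" by (simp add: field_simps)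
      have "H' i j = (a i * b j) * H i j" using eq True by (simp add: algebra_simps)
      also have "\<dots> = H 0 0 / (H i 0 * H 0 j) * H i j" using ab by simp
      finally show ?thesis using True by simp
    next
      case False thus ?thesis using P by auto
    qed
  qed
qed

definition Lam :: "nat \<Rightarrow> (nat \<Rightarrow> nat \<Rightarrow> complex) \<Rightarrow> complex set" where
  "Lam d G = (\<lambda>(i,j,k,l). G i j * G k l * cnj (G i l) * cnj (G k j)) ` ({..<d} \<times> {..<d} \<times> {..<d} \<times> {..<d})"

lemma Lam_finite: "finite (Lam d G)" unfolding Lam_def by simp

lemma Lam_mem: "i<d \<Longrightarrow> j<d \<Longrightarrow> k<d \<Longrightarrow> l<d \<Longrightarrow> G i j * G k l * cnj (G i l) * cnj (G k j) \<in> Lam d G"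
  unfolding Lam_def by (rule rev_image_eqI[of "(i,j,k,l)"]) auto

lemma Lam_transpose_sub: "Lam d (\<lambda>i j. X j i) \<subseteq> Lam d X"
proof
  fix z assume "z \<in> Lam d (\<lambda>i j. X j i)"
  then obtain i j k l where "i<d" "j<d" "k<d" "l<d" and z: "z = X j i * X l k * cnj (X l i) * cnj (X j k)"
    unfolding Lam_def by auto
  moreover have "z = X j i * X l k * cnj (X j k) * cnj (X l i)" using z by (simp add: mult_ac)
  ultimately show "z \<in> Lam d X" using Lam_mem[of j d i l k X] by simp
qed

lemma Lam_transpose: "Lam d (\<lambda>i j. X j i) = Lam d X"
  using Lam_transpose_sub[of d X] Lam_transpose_sub[of d "\<lambda>i j. X j i"] by auto

lemma equiv_Lam:
  assumes "hadamard_equiv d H K"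
  shows "Lam d K \<subseteq> Lam d H"
proof
  obtain a b \<sigma> \<tau> where na: "\<forall>i<d. norm (a i) = 1" and nb: "\<forall>j<d. norm (b j) = 1"
    and s: "\<sigma> permutes {..<d}" and t: "\<tau> permutes {..<d}"
    and eq: "\<forall>i<d. \<forall>j<d. K i j = a i * H (\<sigma> i) (\<tau> j) * b j"
    using assms unfolding hadamard_equiv_def by blast
  fix z assume "z \<in> Lam d K"
  then obtain i j k l where ijkl: "i<d" "j<d" "k<d" "l<d" and z: "z = K i j * K k l * cnj (K i l) * cnj (K k j)"
    unfolding Lam_def by auto
  have z2: "z = (cnj (a i) * a i) * (cnj (a k) * a k) * (cnj (b j) * b j) * (cnj (b l) * b l) *
     (H (\<sigma> i) (\<tau> j) * H (\<sigma> k) (\<tau> l) * cnj (H (\<sigma> i) (\<tau> l)) * cnj (H (\<sigma> k) (\<tau> j)))"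
    using z eq ijkl by (simp add: mult_ac)
  have "z = H (\<sigma> i) (\<tau> j) * H (\<sigma> k) (\<tau> l) * cnj (H (\<sigma> i) (\<tau> l)) * cnj (H (\<sigma> k) (\<tau> j))"
    using z2 na nb ijkl unimod_cnj by simp
  moreover have "\<sigma> i < d" "\<sigma> k < d" "\<tau> j < d" "\<tau> l < d"
    using ijkl s t permutes_in_image by fastforce+
  ultimately show "z \<in> Lam d H" using Lam_mem by simp
qed


lemma cis_inj01: "inj_on cis {0..1::real}"
proof (rule inj_onI)
  fix s t :: real assume "s \<in> {0..1}" "t \<in> {0..1}" "cis s = cis t"
  moreover have "Im (cis s) = sin s" "Im (cis t) = sin t" by simp_all
  moreover have "1 \<le> pi / 2" using pi_gt3 by simp
  ultimately show "s = t" using sin_inj_pi[of s t] by auto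
qed

lemma col_family:
  assumes had: "complex_hadamard d G" and d2: "2 < d" and AB: "A < d" "B < d" "A \<noteq> B"
    and nc: "norm c = 1"
    and er: "\<forall>j<d. cnj (G j A) * G j B = c \<or> cnj (G j A) * G j B = - c"
  shows "\<exists>F :: real \<Rightarrow> nat \<Rightarrow> nat \<Rightarrow> complex.
           (\<forall>i<d. \<forall>j<d. continuous_on {0..1} (\<lambda>t. F t i j)) \<and>
           (\<forall>t\<in>{0..1}. complex_hadamard d (F t)) \<and>
           (\<forall>i<d. \<forall>j<d. F 0 i j = G i j) \<and>
           (\<exists>t\<in>{0..1}. \<not> Lam d (F t) \<subseteq> Lam d G)"
proof -
  have n1: "\<And>i j. i<d \<Longrightarrow> j<d \<Longrightarrow> norm (G i j) = 1" and
    orth: "\<And>j k. j<d \<Longrightarrow> k<d \<Longrightarrow> j \<noteq> k \<Longrightarrow> (\<Sum>i<d. cnj (G i j) * G i k) = 0"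
    using had unfolding complex_hadamard_def by auto
  have c0: "c \<noteq> 0" using nc by auto
  define e where "e i = (if cnj (G i A) * G i B = c then 1 else -1::complex)" for i
  have e_cases: "e i = 1 \<or> e i = -1" for i unfolding e_def by auto
  have ee: "e i * e i = 1" for i using e_cases[of i] by auto
  have ce: "cnj (e i) = e i" for i using e_cases[of i] by auto
  have re: "cnj (G i A) * G i B = c * e i" if "i < d" for i
    using er that unfolding e_def by auto
  have eB: "G i B = c * e i * G i A" if i: "i < d" for i
  proof -
    have "G i B = G i A * (cnj (G i A) * G i B)"
      using unimod_cnj[OF n1[OF i AB(1)]] by (simp add: algebra_simps)
    also have "\<dots> = c * e i * G i A" using re[OF i] by (simp add: algebra_simps)
    finally show ?thesis .
  qed
  have cB: "cnj (G i B) = cnj c * e i * cnj (G i A)" if "i < d" for i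
    using eB[OF that] ce[of i] by simp
  have sA: "(\<Sum>i<d. cnj (G i A) * G i k) = 0" if "k < d" "k \<noteq> A" for k
    using orth[of A k] that AB by simp
  have sE: "(\<Sum>i<d. e i * (cnj (G i A) * G i k)) = 0" if "k < d" "k \<noteq> B" for k
  proof -
    have "(\<Sum>i<d. cnj (G i B) * G i k) = 0" using orth[of B k] that AB by simp
    moreover have "(\<Sum>i<d. cnj (G i B) * G i k) = cnj c * (\<Sum>i<d. e i * (cnj (G i A) * G i k))"
      by (simp add: sum_distrib_left cB mult_ac)
    ultimately show ?thesis using c0 by simp
  qed
  define g where "g t i = (if e i = 1 then 1 else cis t)" for t i
  have g_lin: "cnj (g t i) = (1 + cnj (cis t)) / 2 + e i * (1 - cnj (cis t)) / 2" for t i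
    using e_cases[of i] unfolding g_def by (auto simp: field_simps)
  have gg: "cnj (g t i) * g t i = 1" for t i
    unfolding g_def using unimod_cnj[of "cis t"] by simp
  have ng: "norm (g t i) = 1" for t i unfolding g_def by simp
  define F where "F t i j = (if j = A \<or> j = B then G i j * g t i else G i j)" for t i j
  have cont: "\<forall>i<d. \<forall>j<d. continuous_on {0..1} (\<lambda>t. F t i j)"
  proof (intro allI impI)
    fix i j
    show "continuous_on {0..1} (\<lambda>t. F t i j)"
      unfolding F_def g_def
      by (cases "j = A \<or> j = B"; cases "e i = 1") (simp_all add: continuous_intros)
  qed
  have F0: "\<forall>i<d. \<forall>j<d. F 0 i j = G i j"
    unfolding F_def g_def by simp
  have mixed: "(\<Sum>i<d. cnj (F t i j) * F t i k) = 0"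
    if jk: "j < d" "k < d" "j = A \<or> j = B" "k \<noteq> A" "k \<noteq> B" for t j k
  proof -
    let ?w = "cnj (cis t)"
    have xs: "(\<Sum>i<d. cnj (F t i j) * F t i k) = (\<Sum>i<d. cnj (G i j) * G i k * cnj (g t i))"
      unfolding F_def using jk by (intro sum.cong) (auto simp: mult_ac)
    show ?thesis
    proof (cases "j = A")
      case True
      have "(\<Sum>i<d. cnj (G i j) * G i k * cnj (g t i)) =
          (1 + ?w) / 2 * (\<Sum>i<d. cnj (G i A) * G i k) + (1 - ?w) / 2 * (\<Sum>i<d. e i * (cnj (G i A) * G i k))"
        unfolding sum_distrib_left sum.distrib[symmetric] g_lin True
        by (intro sum.cong) (auto simp: algebra_simps)
      then show ?thesis using xs sA[of k] sE[of k] jk by simp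
    next
      case False
      then have jB: "j = B" using jk by auto
      have "(\<Sum>i<d. cnj (G i j) * G i k * cnj (g t i)) =
          (\<Sum>i<d. cnj c * e i * cnj (G i A) * G i k * cnj (g t i))"
        using jB cB by (intro sum.cong) auto
      also have "\<dots> = cnj c * ((1 + ?w) / 2 * (\<Sum>i<d. e i * (cnj (G i A) * G i k))
           + (1 - ?w) / 2 * (\<Sum>i<d. (e i * e i) * (cnj (G i A) * G i k)))"
        unfolding sum_distrib_left sum.distrib[symmetric] g_lin
        by (intro sum.cong) (auto simp: algebra_simps)
      finally show ?thesis using xs sA[of k] sE[of k] jk ee by simp
    qed
  qed
  have hadF: "complex_hadamard d (F t)" for t
    unfolding complex_hadamard_def
  proof (intro conjI allI impI)
    fix i j assume "i < d" "j < d"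
    thus "norm (F t i j) = 1" unfolding F_def using n1 ng by (simp add: norm_mult)
  next
    fix j k assume jk: "j < d" "k < d" "j \<noteq> k"
    show "(\<Sum>i<d. cnj (F t i j) * F t i k) = 0"
    proof (cases "(j = A \<or> j = B) = (k = A \<or> k = B)")
      case True
      have "(\<Sum>i<d. cnj (F t i j) * F t i k) = (\<Sum>i<d. cnj (G i j) * G i k)"
      proof (intro sum.cong refl)
        fix i assume "i \<in> {..<d}"
        show "cnj (F t i j) * F t i k = cnj (G i j) * G i k"
        proof (cases "j = A \<or> j = B")
          case True
          then have "cnj (F t i j) * F t i k = (cnj (g t i) * g t i) * (cnj (G i j) * G i k)"
            using \<open>(j = A \<or> j = B) = (k = A \<or> k = B)\<close> unfolding F_def by (simp add: mult_ac)
          then show ?thesis using gg by simp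
        next
          case False
          then show ?thesis using \<open>(j = A \<or> j = B) = (k = A \<or> k = B)\<close> unfolding F_def by simp
        qed
      qed
      then show ?thesis using orth jk by simp
    next
      case False
      show ?thesis
      proof (cases "j = A \<or> j = B")
        case True
        then show ?thesis using mixed[of j k t] False jk by auto
      next
        case jn: False
        then have "k = A \<or> k = B" using False by auto
        then have "(\<Sum>i<d. cnj (F t i k) * F t i j) = 0" using mixed[of k j t] jn jk by auto
        then have "cnj (\<Sum>i<d. cnj (F t i k) * F t i j) = 0" by simp
        then show ?thesis by (simp add: mult.commute)
      qed
    qed
  qed
  have sum0: "(\<Sum>i<d. e i) = 0"
  proof -
    have "(\<Sum>i<d. cnj (G i A) * G i B) = 0" using orth AB by simp
    also have "(\<Sum>i<d. cnj (G i A) * G i B) = c * (\<Sum>i<d. e i)"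
      by (simp add: sum_distrib_left re)
    finally show ?thesis using c0 by simp
  qed
  obtain i0 where i0: "i0 < d" "e i0 = -1"
  proof (rule ccontr)
    assume "\<not> thesis"
    then have "\<forall>i<d. e i = 1" using that e_cases by blast
    then have "(\<Sum>i<d. e i) = of_nat d" by simp
    then show False using sum0 d2 by simp
  qed
  obtain k0 where k0: "k0 < d" "e k0 = 1"
  proof (rule ccontr)
    assume "\<not> thesis"
    then have "\<forall>i<d. e i = -1" using that e_cases by blast
    then have "(\<Sum>i<d. e i) = - of_nat d" by (simp add: sum_negf)
    then show False using sum0 d2 by simp
  qed
  obtain C where C: "C < d" "C \<noteq> A" "C \<noteq> B"
  proof -
    have "\<exists>C\<in>{0,1,2::nat}. C \<noteq> A \<and> C \<noteq> B" by auto
    then obtain C where "C \<in> {0,1,2::nat}" "C \<noteq> A" "C \<noteq> B" by blast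
    moreover have "C < d" using \<open>C \<in> {0,1,2}\<close> d2 by auto
    ultimately show ?thesis using that by blast
  qed
  define v where "v = G i0 A * G k0 C * cnj (G i0 C) * cnj (G k0 A)"
  have v0: "v \<noteq> 0" unfolding v_def using n1 i0 k0 C AB by (auto dest: unimod_nz)
  have inF: "cis t * v \<in> Lam d (F t)" for t
  proof -
    have "F t i0 A * F t k0 C * cnj (F t i0 C) * cnj (F t k0 A) = cis t * v"
      unfolding F_def g_def v_def using i0 k0 C by simp
    then show ?thesis using Lam_mem[of i0 d A k0 C "F t"] i0 k0 C AB by simp
  qed
  have "inj_on (\<lambda>t. cis t * v) {0..1}"
    using cis_inj01 v0 by (auto simp: inj_on_def)
  then have "infinite ((\<lambda>t. cis t * v) ` {0..1::real})"
    using finite_imageD infinite_Icc[of "0::real" 1] by auto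
  then obtain z where "z \<in> (\<lambda>t. cis t * v) ` {0..1::real}" "z \<notin> Lam d G"
    using Lam_finite[of d G] by (meson finite_subset subsetI)
  then obtain t where t: "t \<in> {0..1}" "cis t * v \<notin> Lam d G" by auto
  show ?thesis
    apply (rule exI[of _ F])
    using cont hadF F0 t inF by blast
qed

lemma ratio_pm: "(y::complex) \<noteq> 0 \<Longrightarrow> x / y = 1 \<or> x / y = -1 \<Longrightarrow> x = y \<or> x = - y"
  by (auto simp: field_simps)

theorem corollary1:
  fixes d :: nat and H :: "nat \<Rightarrow> nat \<Rightarrow> complex"
  assumes "d > 2"
    and "complex_hadamard d H"
    and "ER_pair_columns d (dephased d H) \<or> ER_pair_rows d (dephased d H)"
  shows "\<exists>F :: real \<Rightarrow> nat \<Rightarrow> nat \<Rightarrow> complex.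
           (\<forall>i<d. \<forall>j<d. continuous_on {0..1} (\<lambda>t. F t i j)) \<and>
           (\<forall>t\<in>{0..1}. complex_hadamard d (F t)) \<and>
           (\<forall>i<d. \<forall>j<d. F 0 i j = H i j) \<and>
           (\<exists>t\<in>{0..1}. \<not> hadamard_equiv d H (F t))"
proof -
  have d0: "d > 0" using assms(1) by simp
  have n1: "\<forall>i<d. \<forall>j<d. norm (H i j) = 1" using assms(2) unfolding complex_hadamard_def by blast
  have nz: "H i j \<noteq> 0" if "i<d" "j<d" for i j using n1 that by fastforce
  have inv: "cnj (H i j) = inverse (H i j)" if "i<d" "j<d" for i j using n1 that unimod_inv by blast
  define D where "D = (\<lambda>i j. if i < d \<and> j < d then H i j * H 0 0 / (H i 0 * H 0 j) else (0::complex))"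
  have deph: "dephased d H = D" unfolding D_def using dephased_eq[OF d0 n1] .
  have nD: "norm (D i j) = 1" if "i<d" "j<d" for i j
    using that n1 d0 unfolding D_def by (simp add: norm_mult norm_divide)
  have fin: "\<not> hadamard_equiv d H K" if "\<not> Lam d K \<subseteq> Lam d H" for K
    using equiv_Lam that by blast
  from assms(3) show ?thesis
  proof
    assume "ER_pair_columns d (dephased d H)"
    then obtain A B where AB: "A < d" "B < d" "A \<noteq> B"
      and er: "\<forall>j<d. cnj (D j A) * D j B \<in> {1, -1}"
      unfolding ER_pair_columns_def deph by blast
    define c where "c = cnj (H 0 A) * H 0 B"
    have nc: "norm c = 1" unfolding c_def using n1 AB d0 by (simp add: norm_mult)
    have er2: "\<forall>j<d. cnj (H j A) * H j B = c \<or> cnj (H j A) * H j B = - c"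
    proof (intro allI impI)
      fix j assume j: "j < d"
      have c_eq: "c = H 0 B / H 0 A" unfolding c_def using inv AB d0 by (simp add: field_simps)
      have dD: "cnj (D j A) * D j B = (H j B / H j A) / (H 0 B / H 0 A)"
        using j AB d0 nz unfolding D_def by (simp add: inv field_simps)
      have hc: "cnj (H j A) * H j B = H j B / H j A" using inv j AB by (simp add: field_simps)
      have c0: "c \<noteq> 0" using nc by auto
      have eqD: "cnj (D j A) * D j B = (H j B / H j A) / c" unfolding c_eq by (rule dD)
      have "cnj (D j A) * D j B \<in> {1, -1}" using er j by blast
      then have "cnj (D j A) * D j B = 1 \<or> cnj (D j A) * D j B = -1" by blast
      then have "(H j B / H j A) / c = 1 \<or> (H j B / H j A) / c = -1" unfolding eqD .
      from ratio_pm[OF c0 this]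
      show "cnj (H j A) * H j B = c \<or> cnj (H j A) * H j B = - c"
        unfolding hc .
    qed
    define P where "P = (\<lambda>F :: real \<Rightarrow> nat \<Rightarrow> nat \<Rightarrow> complex. (\<forall>i<d. \<forall>j<d. continuous_on {0..1} (\<lambda>t. F t i j)) \<and>
      (\<forall>t\<in>{0..1}. complex_hadamard d (F t)) \<and> (\<forall>i<d. \<forall>j<d. F 0 i j = H i j) \<and>
      (\<exists>t\<in>{0..1}. \<not> Lam d (F t) \<subseteq> Lam d H))"
    have exP: "\<exists>F. P F" unfolding P_def using col_family[OF assms(2) assms(1) AB nc er2] by simp
    then obtain F where PF: "P F" by blast
    have FF: "(\<forall>i<d. \<forall>j<d. continuous_on {0..1} (\<lambda>t. F t i j)) \<and>
      (\<forall>t\<in>{0..1}. complex_hadamard d (F t)) \<and> (\<forall>i<d. \<forall>j<d. F 0 i j = H i j) \<and>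
      (\<exists>t\<in>{0..1}. \<not> Lam d (F t) \<subseteq> Lam d H)" using PF unfolding P_def by simp
    note F = conjunct1[OF FF] conjunct1[OF conjunct2[OF FF]] conjunct1[OF conjunct2[OF conjunct2[OF FF]]]
      conjunct2[OF conjunct2[OF conjunct2[OF FF]]]
    have "\<exists>t\<in>{0..1}. \<not> hadamard_equiv d H (F t)" using F(4) fin by blast
    then show ?thesis using F(1) F(2) F(3) by (intro exI[of _ F] conjI)
  next
    assume "ER_pair_rows d (dephased d H)"
    then obtain A B where AB: "A < d" "B < d" "A \<noteq> B"
      and er: "\<forall>j<d. cnj (D A j) * D B j \<in> {1, -1}"
      unfolding ER_pair_rows_def deph by blast
    define G where "G = (\<lambda>i j. H j i)"
    define c where "c = cnj (H A 0) * H B 0"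
    have nc: "norm c = 1" unfolding c_def using n1 AB d0 by (simp add: norm_mult)
    have er2: "\<forall>j<d. cnj (G j A) * G j B = c \<or> cnj (G j A) * G j B = - c"
    proof (intro allI impI)
      fix j assume j: "j < d"
      have c_eq: "c = H B 0 / H A 0" unfolding c_def using inv AB d0 by (simp add: field_simps)
      have dD: "cnj (D A j) * D B j = (H B j / H A j) / (H B 0 / H A 0)"
        using j AB d0 nz unfolding D_def by (simp add: inv field_simps)
      have hc: "cnj (H A j) * H B j = H B j / H A j" using inv j AB by (simp add: field_simps)
      have c0: "c \<noteq> 0" using nc by auto
      have eqD: "cnj (D A j) * D B j = (H B j / H A j) / c" unfolding c_eq by (rule dD)
      have "cnj (D A j) * D B j \<in> {1, -1}" using er j by blast
      then have "cnj (D A j) * D B j = 1 \<or> cnj (D A j) * D B j = -1" by blast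
      then have "(H B j / H A j) / c = 1 \<or> (H B j / H A j) / c = -1" unfolding eqD .
      from ratio_pm[OF c0 this]
      show "cnj (G j A) * G j B = c \<or> cnj (G j A) * G j B = - c"
        unfolding G_def hc .
    qed
    have hG: "complex_hadamard d G" unfolding G_def by (rule hadamard_transpose[OF assms(2)])
    define P where "P = (\<lambda>F :: real \<Rightarrow> nat \<Rightarrow> nat \<Rightarrow> complex. (\<forall>i<d. \<forall>j<d. continuous_on {0..1} (\<lambda>t. F t i j)) \<and>
      (\<forall>t\<in>{0..1}. complex_hadamard d (F t)) \<and> (\<forall>i<d. \<forall>j<d. F 0 i j = G i j) \<and>
      (\<exists>t\<in>{0..1}. \<not> Lam d (F t) \<subseteq> Lam d G))"
    have exP: "\<exists>F. P F" unfolding P_def using col_family[OF hG assms(1) AB nc er2] by simp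
    then obtain F where PF: "P F" by blast
    have FF: "(\<forall>i<d. \<forall>j<d. continuous_on {0..1} (\<lambda>t. F t i j)) \<and>
      (\<forall>t\<in>{0..1}. complex_hadamard d (F t)) \<and> (\<forall>i<d. \<forall>j<d. F 0 i j = G i j) \<and>
      (\<exists>t\<in>{0..1}. \<not> Lam d (F t) \<subseteq> Lam d G)" using PF unfolding P_def by simp
    note F = conjunct1[OF FF] conjunct1[OF conjunct2[OF FF]] conjunct1[OF conjunct2[OF conjunct2[OF FF]]]
      conjunct2[OF conjunct2[OF conjunct2[OF FF]]]
    define F' where "F' t i j = F t j i" for t i j
    have "\<forall>i<d. \<forall>j<d. continuous_on {0..1} (\<lambda>t. F' t i j)" using F(1) unfolding F'_def by blast
    moreover have "\<forall>t\<in>{0..1}. complex_hadamard d (F' t)"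
      using F(2) hadamard_transpose unfolding F'_def by blast
    moreover have "\<forall>i<d. \<forall>j<d. F' 0 i j = H i j" using F(3) unfolding F'_def G_def by simp
    moreover have "\<exists>t\<in>{0..1}. \<not> hadamard_equiv d H (F' t)"
    proof -
      obtain t where t: "t \<in> {0..1}" "\<not> Lam d (F t) \<subseteq> Lam d G" using F(4) by blast
      have "Lam d (F' t) = Lam d (F t)" unfolding F'_def by (rule Lam_transpose)
      moreover have "Lam d G = Lam d H" unfolding G_def by (rule Lam_transpose)
      ultimately show ?thesis using t fin by metis
    qed
    ultimately show ?thesis by (intro exI[of _ F'] conjI)
  qed
qed

end
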